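(* Let $s\in\{1,2\}$ and let $C^s=\{L^s_{a_0,b_0},\dots,L^s_{a_4,b_4}\}\subset\mathcal{L}^s$ be a set of pairwise disjoint lines on ${\rm F}_5$ with $\#C^s=5$. If $\#\{a_0,\dots,a_4\}\le3$, then $\#\psi_5(C^s)\ge3$.
   Context: ${\rm F}_5\subset\mathbb{P}^3(\mathbb{C})$ is the surface $x^5-y^5-z^5+w^5=0$. Let $\eta$ be a primitive 5th root of unity and $v=-1$. For $k,i\in\{0,\dots,4\}$ define $L^1_{k,i}:\{x=\eta^{k+i}z,\ y=\eta^i w\}$, $L^2_{k,i}:\{x=v\eta^i w,\ y=v\eta^{k+i}z\}$, and $\mathcal{L}^s=\{L^s_{k,i}\}_{k,i}$. Define $\psi_5(k,i)=r_5(k+2i)$ with $r_5$ the remainder modulo 5, and $\psi_5(X)$ the set of values $\psi_5(k,i)$ over the lines $L^s_{k,i}\in X$. *)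

theory Defs
  imports Complex_Main
begin

text \<open>Points of P^3(C) are represented by nonzero vectors (x,y,z,w) in C^4; a line in
P^3 is represented by the set of nonzero vectors of the corresponding 2-dimensional
subspace. Two projective lines are disjoint iff these sets are disjoint.\<close>

type_synonym pt4 = "complex \<times> complex \<times> complex \<times> complex"

definition fermat5 :: "pt4 set" where
  "fermat5 = {(x,y,z,w). (x,y,z,w) \<noteq> (0,0,0,0) \<and> x^5 - y^5 - z^5 + w^5 = 0}"

definition primitive5 :: "complex \<Rightarrow> bool" where
  "primitive5 \<eta> \<longleftrightarrow> \<eta> ^ 5 = 1 \<and> \<eta> \<noteq> 1"

text \<open>The lines L^s_{k,i}, with v = -1.\<close>
definition Fline :: "complex \<Rightarrow> nat \<Rightarrow> nat \<Rightarrow> nat \<Rightarrow> pt4 set" where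
  "Fline \<eta> s k i =
     (if s = 1 then {(x,y,z,w). (x,y,z,w) \<noteq> (0,0,0,0) \<and> x = \<eta>^(k+i) * z \<and> y = \<eta>^i * w}
      else {(x,y,z,w). (x,y,z,w) \<noteq> (0,0,0,0) \<and> x = (-1) * \<eta>^i * w \<and> y = (-1) * \<eta>^(k+i) * z})"

definition psi5 :: "nat \<times> nat \<Rightarrow> nat" where
  "psi5 p = (fst p + 2 * snd p) mod 5"

end

theory Submission
  imports Defs
begin

lemma eta_pow_ne1:
  assumes "primitive5 \<eta>" "0 < j" "j < (5::nat)"
  shows "\<eta> ^ j \<noteq> 1"
proof
  assume h: "\<eta> ^ j = 1"
  have e5: "\<eta>^5 = 1" "\<eta> \<noteq> 1" using assms(1) unfolding primitive5_def by auto
  have e6: "\<eta>^6 = \<eta>"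
  proof -
    have "\<eta>^6 = \<eta>^(5+1)" by simp
    also have "\<dots> = \<eta>^5 * \<eta>^1" by (rule power_add)
    finally show ?thesis using e5 by simp
  qed
  have e16: "\<eta>^16 = \<eta>"
  proof -
    have a: "(\<eta>^5)^3 * \<eta>^1 = \<eta>^(5*3+1)" by (simp only: power_mult power_add)
    have "(5*3+1::nat) = 16" by simp
    hence "\<eta>^16 = (\<eta>^5)^3 * \<eta>" using a by simp
    thus ?thesis using e5 by simp
  qed
  from assms(2,3) consider "j=1" | "j=2" | "j=3" | "j=4" by linarith
  then show False
  proof cases
    case 1 then show ?thesis using h e5 by simp
  next
    case 2
    have p: "\<eta>^6 = (\<eta>^2)^3" by (simp add: power_mult[symmetric])
    have hj: "\<eta>^2 = 1" using h 2 by simp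
    have "\<eta> = (\<eta>^2)^3" using p e6 by simp
    also have "\<dots> = 1" using hj by simp
    finally show ?thesis using e5 by simp
  next
    case 3
    have p: "\<eta>^6 = (\<eta>^3)^2" by (simp add: power_mult[symmetric])
    have hj: "\<eta>^3 = 1" using h 3 by simp
    have "\<eta> = (\<eta>^3)^2" using p e6 by simp
    also have "\<dots> = 1" using hj by simp
    finally show ?thesis using e5 by simp
  next
    case 4
    have p: "\<eta>^16 = (\<eta>^4)^4" by (simp add: power_mult[symmetric])
    have hj: "\<eta>^4 = 1" using h 4 by simp
    have "\<eta> = (\<eta>^4)^4" using p e16 by simp
    also have "\<dots> = 1" using hj by simp
    finally show ?thesis using e5 by simp
  qed
qed

lemma eta_pow_mod:
  assumes "primitive5 \<eta>"
  shows "\<eta> ^ n = \<eta> ^ (n mod 5)"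
proof -
  have e5: "\<eta>^5 = 1" using assms unfolding primitive5_def by auto
  have "\<eta> ^ n = \<eta> ^ (5 * (n div 5) + n mod 5)" by (simp only: mult_div_mod_eq)
  also have "\<dots> = (\<eta>^5)^(n div 5) * \<eta> ^ (n mod 5)" by (simp only: power_add power_mult)
  finally show ?thesis using e5 by simp
qed

lemma eta_pow_eq:
  assumes "primitive5 \<eta>" "\<eta> ^ a = \<eta> ^ b"
  shows "a mod 5 = b mod (5::nat)"
proof (rule ccontr)
  assume ne: "a mod 5 \<noteq> b mod 5"
  define a' where "a' = a mod 5"
  define b' where "b' = b mod 5"
  have ab: "\<eta>^a' = \<eta>^b'" using assms eta_pow_mod[OF assms(1)] a'_def b'_def by metis
  have nz: "\<eta> \<noteq> 0" using assms(1) unfolding primitive5_def by auto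
  have lt: "a' < 5" "b' < 5" "a' \<noteq> b'" using ne a'_def b'_def by auto
  show False
  proof (cases "a' < b'")
    case True
    have "\<eta>^b' = \<eta>^a' * \<eta>^(b'-a')" using True by (simp add: power_add[symmetric])
    hence "\<eta>^(b'-a') = 1" using ab nz by simp
    thus False using eta_pow_ne1[OF assms(1), of "b'-a'"] True lt by simp
  next
    case False
    hence F: "b' < a'" using lt by simp
    have "\<eta>^a' = \<eta>^b' * \<eta>^(a'-b')" using F by (simp add: power_add[symmetric])
    hence "\<eta>^(a'-b') = 1" using ab nz by simp
    thus False using eta_pow_ne1[OF assms(1), of "a'-b'"] F lt by simp
  qed
qed

lemma disj_cond:
  assumes "primitive5 \<eta>" "s \<in> {1,2}"
    and "Fline \<eta> s k i \<inter> Fline \<eta> s k' i' = {}"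
    and "i < 5" "i' < 5"
  shows "i \<noteq> i' \<and> (k + i) mod 5 \<noteq> (k' + i') mod 5"
proof (intro conjI notI)
  assume "i = i'"
  show False
  proof (cases "s = 1")
    case True
    have "(0, \<eta>^i, 0, 1) \<in> Fline \<eta> s k i \<inter> Fline \<eta> s k' i'"
      using True \<open>i = i'\<close> by (simp add: Fline_def)
    thus False using assms(3) by simp
  next
    case False
    have "(-(\<eta>^i), 0, 0, 1) \<in> Fline \<eta> s k i \<inter> Fline \<eta> s k' i'"
      using False \<open>i = i'\<close> by (simp add: Fline_def)
    thus False using assms(3) by simp
  qed
next
  assume h: "(k + i) mod 5 = (k' + i') mod 5"
  have eq: "\<eta>^(k+i) = \<eta>^(k'+i')"
    using eta_pow_mod[OF assms(1), of "k+i"] eta_pow_mod[OF assms(1), of "k'+i'"] h by simp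
  show False
  proof (cases "s = 1")
    case True
    have "(\<eta>^(k+i), 0, 1, 0) \<in> Fline \<eta> s k i \<inter> Fline \<eta> s k' i'"
      using True eq by (simp add: Fline_def)
    thus False using assms(3) by simp
  next
    case False
    have "(0, -(\<eta>^(k+i)), 1, 0) \<in> Fline \<eta> s k i \<inter> Fline \<eta> s k' i'"
      using False eq by (simp add: Fline_def)
    thus False using assms(3) by simp
  qed
qed

lemma arith_aux:
  assumes "1 \<le> a" "a \<le> 4" "c < 5" "d < 5" "c \<noteq> d"
  shows "(a * c + (5 - a) * d) mod 5 \<noteq> (0::nat)"
proof -
  have "a \<in> {1,2,3,4}" "c \<in> {0,1,2,3,4}" "d \<in> {0,1,2,3,4}" using assms by auto
  thus ?thesis using assms(5) by (elim insertE emptyE; simp)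
qed

lemma mod_aux0:
  assumes "(f + 2*a) mod 5 = (f + 2*b) mod 5" "a \<le> b" "b < (5::nat)"
  shows "a = b"
proof -
  have "5 dvd (f + 2*b) - (f + 2*a)" using assms(1,2) mod_eq_dvd_iff_nat[of "f+2*a" "f+2*b" 5] by simp
  hence "5 dvd 2 * (b - a)" by (simp add: diff_mult_distrib2)
  moreover have "b - a \<in> {0,1,2,3,4}" using assms(3) by auto
  ultimately have "b - a = 0" by auto
  thus ?thesis using assms(2) by simp
qed

lemma mod_aux: "(f + 2*a) mod 5 = (f + 2*b) mod 5 \<Longrightarrow> a < 5 \<Longrightarrow> b < 5 \<Longrightarrow> a = (b::nat)"
  by (metis mod_aux0 nat_le_linear)

theorem lemma3p4:
  fixes \<eta> :: complex and s :: nat and S :: "(nat \<times> nat) set"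
  assumes "primitive5 \<eta>"
    and "s \<in> {1, 2}"
    and "S \<subseteq> {0..4} \<times> {0..4}"
    and "card S = 5"
    and "\<forall>p\<in>S. \<forall>q\<in>S. p \<noteq> q \<longrightarrow>
           Fline \<eta> s (fst p) (snd p) \<inter> Fline \<eta> s (fst q) (snd q) = {}"
    and "card (fst ` S) \<le> 3"
  shows "card (psi5 ` S) \<ge> 3"
proof (rule ccontr)
  assume contra: "\<not> card (psi5 ` S) \<ge> 3"
  have fin: "finite S" using assms(4) card.infinite by fastforce
  have D: "snd p \<noteq> snd q \<and> (fst p + snd p) mod 5 \<noteq> (fst q + snd q) mod 5"
    if "p \<in> S" "q \<in> S" "p \<noteq> q" for p q
  proof -
    have "snd p < 5" "snd q < 5" using that assms(3) by fastforce+
    thus ?thesis using disj_cond[OF assms(1,2)] assms(5) that by metis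
  qed
  define h where "h = (\<lambda>p::nat\<times>nat. (fst p + snd p) mod 5)"
  have injs: "inj_on snd S" using D by (meson inj_onI)
  have injh: "inj_on h S" using D unfolding h_def by (meson inj_onI)
  have sndS: "snd ` S = {0..<5}"
  proof (rule card_subset_eq)
    show "snd ` S \<subseteq> {0..<5}" using assms(3) by fastforce
    show "card (snd ` S) = card {0..<5::nat}" using card_image[OF injs] assms(4) by simp
  qed simp
  have hS: "h ` S = {0..<5}"
  proof (rule card_subset_eq)
    show "h ` S \<subseteq> {0..<5}" unfolding h_def by auto
    show "card (h ` S) = card {0..<5::nat}" using card_image[OF injh] assms(4) by simp
  qed simp
  have sum_snd: "sum snd S = 10"
    using sum.reindex[OF injs, of id] sndS by (simp add: numeral_eq_Suc)
  have sum_h: "sum h S = 10"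
    using sum.reindex[OF injh, of id] hS by (simp add: numeral_eq_Suc)
  have "sum (\<lambda>p. fst p + snd p) S mod 5 = sum h S mod 5"
    unfolding h_def by (simp add: mod_sum_eq)
  hence s1: "sum (\<lambda>p. fst p + snd p) S mod 5 = 0" using sum_h by simp
  have "sum psi5 S mod 5 = sum (\<lambda>p. fst p + 2 * snd p) S mod 5"
    unfolding psi5_def by (simp add: mod_sum_eq)
  also have "sum (\<lambda>p. fst p + 2 * snd p) S = sum (\<lambda>p. fst p + snd p) S + sum snd S"
  proof -
    have "sum (\<lambda>p. fst p + 2 * snd p) S = sum (\<lambda>p. (fst p + snd p) + snd p) S"
      by (rule sum.cong) auto
    thus ?thesis by (simp only: sum.distrib)
  qed
  finally have sumpsi: "sum psi5 S mod 5 = 0" using s1 sum_snd by presburger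
  have const: "\<exists>c. \<forall>p\<in>S. psi5 p = c"
  proof (rule ccontr)
    assume nc: "\<not> (\<exists>c. \<forall>p\<in>S. psi5 p = c)"
    have ne: "S \<noteq> {}" using assms(4) by auto
    then obtain p0 where p0: "p0 \<in> S" by auto
    define c where "c = psi5 p0"
    obtain q0 where q0: "q0 \<in> S" "psi5 q0 \<noteq> c" using nc by blast
    define d where "d = psi5 q0"
    have cd: "c \<noteq> d" using q0 d_def by simp
    have sub: "{c, d} \<subseteq> psi5 ` S" using p0 q0 c_def d_def by auto
    have "card (psi5 ` S) \<le> 2" using contra by simp
    moreover have "card {c,d} = 2" using cd by simp
    moreover have "finite (psi5 ` S)" using fin by simp
    ultimately have img: "psi5 ` S = {c, d}" using sub by (metis card_seteq)
    define A where "A = {p\<in>S. psi5 p = c}"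
    define B where "B = {p\<in>S. psi5 p \<noteq> c}"
    have finA: "finite A" "finite B" using fin A_def B_def by auto
    have AB: "S = A \<union> B" "A \<inter> B = {}" using A_def B_def by auto
    have cardAB: "card A + card B = 5" using card_Un_disjoint[OF finA] AB assms(4) by simp
    have Bd: "\<forall>p\<in>B. psi5 p = d" using img B_def by auto
    have "sum psi5 S = sum psi5 A + sum psi5 B" using sum.union_disjoint[OF finA AB(2)] AB(1) by simp
    also have "sum psi5 A = card A * c" using A_def by simp
    also have "sum psi5 B = card B * d" using Bd by simp
    finally have sS0: "sum psi5 S = card A * c + card B * d" .
    have "card B = 5 - card A" using cardAB by simp
    hence sS: "sum psi5 S = card A * c + (5 - card A) * d" using sS0 by simp
    have "card A \<ge> 1" using p0 c_def A_def finA card_0_eq by fastforce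
    moreover have "card B \<ge> 1" using q0 B_def finA card_0_eq by fastforce
    moreover have "c < 5" "d < 5" unfolding c_def d_def psi5_def by auto
    ultimately show False using arith_aux[of "card A" c d] cd cardAB sS sumpsi by simp
  qed
  then obtain c where c: "\<forall>p\<in>S. psi5 p = c" by auto
  have injf: "inj_on fst S"
  proof (rule inj_onI)
    fix p q assume pq: "p \<in> S" "q \<in> S" "fst p = fst q"
    have "psi5 p = psi5 q" using c pq by simp
    hence "(fst q + 2 * snd p) mod 5 = (fst q + 2 * snd q) mod 5"
      using pq(3) unfolding psi5_def by simp
    moreover have "snd p < 5" "snd q < 5" using pq assms(3) by fastforce+
    ultimately have "snd p = snd q" using mod_aux by blast
    thus "p = q" using D pq by blast
  qed
  have "card (fst ` S) = 5" using card_image[OF injf] assms(4) by simp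
  thus False using assms(6) by simp
qed

end
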